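(* Let $1\le p<2$, $f\in\mathcal H_0$, $u$ the solution of $\partial_tu+\partial J(u)\ni0$, $u(0)=f$, with extinction time $T_{\mathrm{ex}}<\infty$, and $w(t):=u(t)/a(t)$ with $a(t)=(1-t/T_{\mathrm{ex}})^{1/(2-p)}$, $0\le t<T_{\mathrm{ex}}$. Let $w_*$ be an asymptotic profile, i.e. $w_*\in\mathcal H$ with $w(t_k)\to w_*$ strongly for some sequence $t_k\nearrow T_{\mathrm{ex}}$. Then $(2-p)\lambda_1T_{\mathrm{ex}}\le\|w_*\|^{2-p}$, and equality holds if and only if $w_*$ is a ground state.
   Context: $\mathcal H$ is a real Hilbert space with inner product $\langle\cdot,\cdot\rangle$ and norm $\|\cdot\|$. $J:\mathcal H\to\mathbb R\cup\{\infty\}$ is convex, lower semicontinuous, proper, with dense effective domain, and absolutely $p$-homogeneous: $J(cu)=|c|^pJ(u)$ for $c\ne0$, $J(0)=0$. $\partial J(u)=\{\zeta: J(u)+\langle\zeta,v-u\rangle\le J(v)\ \forall v\}$; $\mathcal N(J)=\{u:J(u)=0\}$; $\mathcal H_0:=\mathcal N(J)^\perp\setminus\{0\}$. Standing coercivity assumption: $\lambda_1:=\inf_{u\in\mathcal H_0}R(u)>0$ with Rayleigh quotient $R(u):=pJ(u)/\|u\|^p$; a ground state is a minimizer of $R$ over $\mathcal H_0$. The gradient flow solution (Brezis) is the unique continuous $u:[0,\infty)\to\mathcal H$, Lipschitz on $[\delta,\infty)$ for all $\delta>0$, right-differentiable on $(0,\infty)$ with $u(0)=f$ and $\partial_t^+u(t)=-\zeta(t)$,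 $\zeta(t)$ the minimal-norm element of $\partial J(u(t))$. $T_{\mathrm{ex}}:=\inf\{T>0:u(t)=0\ \forall t\ge T\}$. *)

theory Defs
  imports "HOL-Analysis.Analysis"
begin

definition convex_ereal :: "('a::real_vector \<Rightarrow> ereal) \<Rightarrow> bool" where
  "convex_ereal J \<longleftrightarrow> (\<forall>u v. \<forall>t::real. 0 < t \<and> t < 1 \<longrightarrow>
      J ((1 - t) *\<^sub>R u + t *\<^sub>R v) \<le> ereal (1 - t) * J u + ereal t * J v)"

definition lsc_ereal :: "('a::topological_space \<Rightarrow> ereal) \<Rightarrow> bool" where
  "lsc_ereal J \<longleftrightarrow> (\<forall>c::real. closed {u. J u \<le> ereal c})"

definition proper_fun :: "('a \<Rightarrow> ereal) \<Rightarrow> bool" where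
  "proper_fun J \<longleftrightarrow> (\<forall>u. J u \<noteq> -\<infinity>) \<and> (\<exists>u. J u \<noteq> \<infinity>)"

definition dense_domain :: "('a::topological_space \<Rightarrow> ereal) \<Rightarrow> bool" where
  "dense_domain J \<longleftrightarrow> closure {u. J u < \<infinity>} = UNIV"

definition abs_homogeneous :: "real \<Rightarrow> ('a::real_vector \<Rightarrow> ereal) \<Rightarrow> bool" where
  "abs_homogeneous p J \<longleftrightarrow> J 0 = 0 \<and>
      (\<forall>c u. c \<noteq> 0 \<longrightarrow> J (c *\<^sub>R u) = ereal (\<bar>c\<bar> powr p) * J u)"

definition admissible :: "real \<Rightarrow> ('a::{real_inner,complete_space} \<Rightarrow> ereal) \<Rightarrow> bool" where
  "admissible p J \<longleftrightarrow> convex_ereal J \<and> lsc_ereal J \<and> proper_fun J \<and> dense_domain J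
      \<and> abs_homogeneous p J"

definition subdiff :: "('a::real_inner \<Rightarrow> ereal) \<Rightarrow> 'a \<Rightarrow> 'a set" where
  "subdiff J u = {\<zeta>. \<forall>v. J u + ereal (inner \<zeta> (v - u)) \<le> J v}"

definition nullspace :: "('a::real_inner \<Rightarrow> ereal) \<Rightarrow> 'a set" where
  "nullspace J = {u. J u = 0}"

definition H0 :: "('a::real_inner \<Rightarrow> ereal) \<Rightarrow> 'a set" where
  "H0 J = {u. \<forall>v\<in>nullspace J. inner u v = 0} - {0}"

definition rayleigh :: "real \<Rightarrow> ('a::real_inner \<Rightarrow> ereal) \<Rightarrow> 'a \<Rightarrow> ereal" where
  "rayleigh p J u = ereal p * J u / ereal (norm u powr p)"

definition lambda1 :: "real \<Rightarrow> ('a::real_inner \<Rightarrow> ereal) \<Rightarrow> ereal" where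
  "lambda1 p J = (INF u\<in>H0 J. rayleigh p J u)"

definition ground_state :: "real \<Rightarrow> ('a::real_inner \<Rightarrow> ereal) \<Rightarrow> 'a \<Rightarrow> bool" where
  "ground_state p J u \<longleftrightarrow> u \<in> H0 J \<and> rayleigh p J u = lambda1 p J"

definition min_norm_elem :: "'a::real_normed_vector set \<Rightarrow> 'a \<Rightarrow> bool" where
  "min_norm_elem S z \<longleftrightarrow> z \<in> S \<and> (\<forall>y\<in>S. norm z \<le> norm y)"

text \<open>Brezis gradient flow solution of du/dt + dJ(u) \<ni> 0, u(0) = f.\<close>
definition gradient_flow :: "('a::{real_inner,complete_space} \<Rightarrow> ereal) \<Rightarrow> 'a \<Rightarrow> (real \<Rightarrow> 'a) \<Rightarrow> bool" where
  "gradient_flow J f u \<longleftrightarrow>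
     continuous_on {0..} u \<and>
     (\<forall>\<delta>>0. \<exists>L. L-lipschitz_on {\<delta>..} u) \<and>
     u 0 = f \<and>
     (\<forall>t>0. \<exists>\<zeta>. min_norm_elem (subdiff J (u t)) \<zeta> \<and>
                 (u has_vector_derivative (- \<zeta>)) (at t within {t..}))"

definition extinction_time :: "(real \<Rightarrow> 'a::zero) \<Rightarrow> real" where
  "extinction_time u = Inf {T. T > 0 \<and> (\<forall>t\<ge>T. u t = 0)}"

end

theory Submission
  imports Defs
begin


lemma rd_mono:
  fixes g :: "real \<Rightarrow> real"
  assumes ab: "a \<le> b" and cont: "continuous_on {a..b} g"
    and der: "\<And>t. a < t \<Longrightarrow> t < b \<Longrightarrow> \<exists>D. (g has_real_derivative D) (at t within {t..}) \<and> D \<le> 0"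
  shows "g b \<le> g a"
proof -
  have key: "g t \<le> g a + e * (t - a) + e" if e: "e > 0" and t: "t \<in> {a..b}" for e t
  proof (rule ccontr)
    assume nt: "\<not> ?thesis"
    define h where "h s = g a + e*(s-a) + e" for s
    define K where "K = {a..t} \<inter> (\<lambda>s. g s - h s) -` {..0}"
    have contt: "continuous_on {a..t} g" using cont t by (auto intro: continuous_on_subset)
    have "continuous_on {a..t} (\<lambda>s. g s - h s)" unfolding h_def
      by (intro continuous_intros contt)
    hence cK: "closed K" unfolding K_def by (intro continuous_closed_preimage) auto
    have aK: "a \<in> K" using t e by (auto simp: K_def h_def)
    have bK: "bdd_above K" unfolding K_def by (auto intro: bdd_aboveI[of _ t])
    define c where "c = Sup K"
    have cK': "c \<in> K" unfolding c_def using closed_contains_Sup[OF _ bK cK] aK by auto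
    have tK: "t \<notin> K" using nt by (auto simp: K_def h_def)
    have ac: "a \<le> c" and gc: "g c \<le> h c" and ct0: "c \<le> t" using cK' by (auto simp: K_def)
    have ct: "c < t" using ct0 cK' tK by (cases "c = t") auto
    have upper: "s \<le> c" if "s \<in> K" for s unfolding c_def using that bK by (rule cSup_upper)
    have "\<exists>d>0. \<forall>s. c < s \<and> s < c + d \<longrightarrow> g s < h s"
    proof (cases "c = a")
      case True
      have "(g \<longlongrightarrow> g a) (at a within {a..b})" using cont ab
        by (simp add: continuous_on_def)
      hence "eventually (\<lambda>s. dist (g s) (g a) < e) (at a within {a..b})"
        using e by (rule tendstoD)
      then obtain d where d: "d > 0" "\<forall>s\<in>{a..b}. s \<noteq> a \<and> dist s a < d \<longrightarrow> dist (g s) (g a) < e"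
        by (auto simp: eventually_at)
      show ?thesis
      proof (intro exI[of _ "min d (b - a)"] conjI allI impI)
        show "0 < min d (b - a)" using d ct t True by auto
        fix s assume s: "c < s \<and> s < c + min d (b - a)"
        have "dist (g s) (g a) < e" using d True s by (auto simp: dist_real_def)
        moreover have "e * (s - a) > 0" using s True e by simp
        ultimately show "g s < h s" by (auto simp: h_def dist_real_def)
      qed
    next
      case False
      hence ac': "a < c" using ac by auto
      have cb: "c < b" using ct t by auto
      obtain D where D: "(g has_real_derivative D) (at c within {c..})" "D \<le> 0"
        using der[OF ac' cb] by blast
      have "((\<lambda>y. (g y - g c) / (y - c)) \<longlongrightarrow> D) (at c within {c..})"
        using D(1) by (simp add: has_field_derivative_iff)
      hence "eventually (\<lambda>y. (g y - g c) / (y - c) < e) (at c within {c..})"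
        using D(2) e by (intro order_tendstoD(2)[of _ D]) auto
      then obtain d where d: "d > 0" "\<forall>s\<in>{c..}. s \<noteq> c \<and> dist s c < d \<longrightarrow> (g s - g c) / (s - c) < e"
        by (auto simp: eventually_at)
      show ?thesis
      proof (intro exI[of _ d] conjI allI impI)
        show "0 < d" using d by auto
        fix s assume s: "c < s \<and> s < c + d"
        hence "(g s - g c) / (s - c) < e" using d by (auto simp: dist_real_def)
        hence "g s - g c < e * (s - c)" using s by (simp add: divide_less_eq)
        thus "g s < h s" using gc by (auto simp: h_def algebra_simps)
      qed
    qed
    then obtain d where d: "d > 0" "\<forall>s. c < s \<and> s < c + d \<longrightarrow> g s < h s" by blast
    define m where "m = min d (t - c)"
    have m1: "m > 0" "m \<le> d" "m \<le> t - c" using d ct by (auto simp: m_def)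
    define s where "s = c + m / 2"
    have s1a: "c < s" using m1 unfolding s_def by linarith
    have s1b: "s < c + d" using m1 unfolding s_def by linarith
    have s1c: "s \<le> t" using m1 unfolding s_def by linarith
    note s1 = s1a s1b s1c
    hence "s \<in> K" using d ac by (auto simp: K_def)
    thus False using upper s1 by fastforce
  qed
  show ?thesis
  proof (rule ccontr)
    assume neg: "\<not> g b \<le> g a"
    define e where "e = (g b - g a) / (2 * (b - a + 1))"
    have e: "e > 0" using neg ab by (auto simp: e_def)
    have "g b \<le> g a + e * (b - a) + e" using key[OF e] ab by auto
    also have "\<dots> = g a + e * (b - a + 1)" by (simp add: algebra_simps)
    also have "e * (b - a + 1) = (g b - g a) / 2" using ab unfolding e_def by (simp add: divide_simps)
    finally have "g b \<le> g a + (g b - g a) / 2" .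
    thus False using neg by (simp add: field_simps)
  qed
qed

lemma vd_inner_self:
  fixes z :: "real \<Rightarrow> 'a::real_inner"
  assumes "(z has_vector_derivative v) (at t within S)"
  shows "((\<lambda>t. inner (z t) (z t)) has_real_derivative 2 * inner (z t) v) (at t within S)"
proof -
  have zd: "(z has_derivative (\<lambda>h. h *\<^sub>R v)) (at t within S)"
    using assms by (simp add: has_vector_derivative_def)
  have "((\<lambda>t. inner (z t) (z t)) has_derivative (\<lambda>h. inner (z t) (h *\<^sub>R v) + inner (h *\<^sub>R v) (z t))) (at t within S)"
    by (rule has_derivative_inner[OF zd zd])
  thus ?thesis unfolding has_field_derivative_def
    by (rule has_derivative_eq_rhs) (auto simp: fun_eq_iff inner_commute algebra_simps)
qed

lemma vd_inner_const:
  fixes z :: "real \<Rightarrow> 'a::real_inner"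
  assumes "(z has_vector_derivative v) (at t within S)"
  shows "((\<lambda>t. inner (z t) n) has_real_derivative inner v n) (at t within S)"
proof -
  have zd: "(z has_derivative (\<lambda>h. h *\<^sub>R v)) (at t within S)"
    using assms by (simp add: has_vector_derivative_def)
  have "((\<lambda>t. inner (z t) n) has_derivative (\<lambda>h. inner (h *\<^sub>R v) n)) (at t within S)"
    by (rule has_derivative_inner_left[OF zd])
  thus ?thesis unfolding has_field_derivative_def
    by (rule has_derivative_eq_rhs) (auto simp: fun_eq_iff)
qed

lemma contraction:
  fixes x y :: "real \<Rightarrow> 'a::real_inner"
  assumes ab: "a \<le> b" and cx: "continuous_on {a..b} x" and cy: "continuous_on {a..b} y"
    and der: "\<And>t. a < t \<Longrightarrow> t < b \<Longrightarrow> \<exists>\<xi> \<eta>. (x has_vector_derivative - \<xi>) (at t within {t..})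
        \<and> (y has_vector_derivative - \<eta>) (at t within {t..}) \<and> inner (\<xi> - \<eta>) (x t - y t) \<ge> 0"
  shows "norm (x b - y b) \<le> norm (x a - y a)"
proof -
  define z where "z t = x t - y t" for t
  have "inner (z b) (z b) \<le> inner (z a) (z a)"
  proof (rule rd_mono[OF ab, where g = "\<lambda>t. inner (z t) (z t)"])
    show "continuous_on {a..b} (\<lambda>t. inner (z t) (z t))" unfolding z_def
      by (intro continuous_intros cx cy)
    fix t assume t: "a < t" "t < b"
    obtain \<xi> \<eta> where h: "(x has_vector_derivative - \<xi>) (at t within {t..})"
        "(y has_vector_derivative - \<eta>) (at t within {t..})" "inner (\<xi> - \<eta>) (x t - y t) \<ge> 0"
      using der[OF t] by blast
    have "(z has_vector_derivative (- \<xi> - - \<eta>)) (at t within {t..})"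
      unfolding z_def using h(1,2) by (rule has_vector_derivative_diff)
    hence "((\<lambda>t. inner (z t) (z t)) has_real_derivative 2 * inner (z t) (- \<xi> - - \<eta>)) (at t within {t..})"
      by (rule vd_inner_self)
    moreover have "2 * inner (z t) (- \<xi> - - \<eta>) \<le> 0" using h(3)
      by (simp add: z_def inner_diff_right inner_diff_left inner_commute algebra_simps)
    ultimately show "\<exists>D. ((\<lambda>t. inner (z t) (z t)) has_real_derivative D) (at t within {t..}) \<and> D \<le> 0"
      by blast
  qed
  thus ?thesis unfolding z_def by (simp add: norm_eq_sqrt_inner real_sqrt_le_iff)
qed




lemma adm_hom: "admissible p J \<Longrightarrow> c \<noteq> 0 \<Longrightarrow> J (c *\<^sub>R u) = ereal (\<bar>c\<bar> powr p) * J u"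
  by (simp add: admissible_def abs_homogeneous_def)

lemma adm_J0: "admissible p J \<Longrightarrow> J 0 = 0"
  by (simp add: admissible_def abs_homogeneous_def)

lemma adm_not_minf: "admissible p J \<Longrightarrow> J u \<noteq> -\<infinity>"
  by (simp add: admissible_def proper_fun_def)

lemma J_nonneg:
  assumes adm: "admissible p J"
  shows "J x \<ge> 0"
proof -
  have cv: "convex_ereal J" using adm by (simp add: admissible_def)
  have "J ((1 - 1/2) *\<^sub>R x + (1/2) *\<^sub>R (- x)) \<le> ereal (1 - 1/2) * J x + ereal (1/2) * J (- x)"
    using cv[unfolded convex_ereal_def, rule_format, of "1/2" x "-x"] by simp
  moreover have "(1 - 1/2) *\<^sub>R x + (1/2) *\<^sub>R (- x) = (0::'a)" by (simp add: algebra_simps)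
  moreover have "J (- x) = J x" using adm_hom[OF adm, of "-1" x] by simp
  ultimately have "0 \<le> ereal (1/2) * J x + ereal (1/2) * J x" using adm_J0[OF adm] by simp
  thus ?thesis using adm_not_minf[OF adm, of x] by (cases "J x") auto
qed

lemma subdiff_finite:
  assumes adm: "admissible p J" and z: "\<zeta> \<in> subdiff J x"
  obtains j where "J x = ereal j"
proof -
  obtain v where v: "J v \<noteq> \<infinity>" using adm by (auto simp: admissible_def proper_fun_def)
  have "J x + ereal (inner \<zeta> (v - x)) \<le> J v" using z by (simp add: subdiff_def)
  hence "J x \<noteq> \<infinity>" using v by auto
  thus ?thesis using that adm_not_minf[OF adm, of x] by (cases "J x") auto
qed

lemma subgrad_real:
  assumes z: "\<zeta> \<in> subdiff J x" and jx: "J x = ereal j" and jv: "J v = ereal k"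
  shows "j + inner \<zeta> (v - x) \<le> k"
  using z jx jv by (auto simp: subdiff_def elim!: allE[of _ v])

lemma euler:
  assumes adm: "admissible p J" and z: "\<zeta> \<in> subdiff J x" and jx: "J x = ereal j"
  shows "inner \<zeta> x = p * j"
proof -
  define F where "F s = s powr p * j - (s - 1) * inner \<zeta> x - j" for s
  have F1: "F 1 = 0" by (simp add: F_def)
  have Fge: "F 1 \<le> F s" if "\<bar>1 - s\<bar> < 1" for s
  proof -
    have s: "s > 0" using that by auto
    have "J (s *\<^sub>R x) = ereal (s powr p * j)" using adm_hom[OF adm, of s x] s jx by simp
    hence "j + inner \<zeta> (s *\<^sub>R x - x) \<le> s powr p * j" by (rule subgrad_real[OF z jx])
    hence "j + (s - 1) * inner \<zeta> x \<le> s powr p * j" by (simp add: inner_diff_right algebra_simps)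
    thus ?thesis using F1 by (simp add: F_def)
  qed
  have "DERIV F 1 :> (p * j - inner \<zeta> x)"
    unfolding F_def by (auto intro!: derivative_eq_intros)
  hence "p * j - inner \<zeta> x = 0"
    by (rule DERIV_local_min[where d=1]) (use Fge in auto)
  thus ?thesis by simp
qed

lemma zeta_null:
  assumes adm: "admissible p J" and z: "\<zeta> \<in> subdiff J x" and n: "n \<in> nullspace J"
  shows "inner \<zeta> n = 0"
proof (rule ccontr)
  assume nz: "inner \<zeta> n \<noteq> 0"
  obtain j where jx: "J x = ereal j" using subdiff_finite[OF adm z] by blast
  define s where "s = (inner \<zeta> x - j + 1) / inner \<zeta> n"
  have "J (s *\<^sub>R n) = 0"
  proof (cases "s = 0")
    case True thus ?thesis using adm_J0[OF adm] by simp
  next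
    case False thus ?thesis using adm_hom[OF adm, of s n] n by (simp add: nullspace_def)
  qed
  hence "j + inner \<zeta> (s *\<^sub>R n - x) \<le> 0" using subgrad_real[OF z jx, of "s *\<^sub>R n" 0] by (simp add: zero_ereal_def)
  moreover have "inner \<zeta> (s *\<^sub>R n) = inner \<zeta> x - j + 1" using nz by (simp add: s_def)
  ultimately show False by (simp add: inner_diff_right)
qed

lemma subdiff_mono:
  assumes adm: "admissible p J" and z: "\<zeta> \<in> subdiff J x" and e: "\<eta> \<in> subdiff J y"
  shows "inner (\<zeta> - \<eta>) (x - y) \<ge> 0"
proof -
  obtain j where jx: "J x = ereal j" using subdiff_finite[OF adm z] by blast
  obtain k where jy: "J y = ereal k" using subdiff_finite[OF adm e] by blast
  have "j + inner \<zeta> (y - x) \<le> k" by (rule subgrad_real[OF z jx jy])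
  moreover have "k + inner \<eta> (x - y) \<le> j" by (rule subgrad_real[OF e jy jx])
  ultimately show ?thesis by (simp add: inner_diff_right inner_diff_left algebra_simps)
qed

lemma subdiff_scale:
  assumes adm: "admissible p J" and z: "\<zeta> \<in> subdiff J x" and c: "c > 0"
  shows "(c powr (p - 1)) *\<^sub>R \<zeta> \<in> subdiff J (c *\<^sub>R x)"
  unfolding subdiff_def
proof (intro CollectI allI)
  fix v
  obtain j where jx: "J x = ereal j" using subdiff_finite[OF adm z] by blast
  have jcx: "J (c *\<^sub>R x) = ereal (c powr p * j)" using adm_hom[OF adm, of c x] c jx by simp
  have jv: "J v = ereal (c powr p) * J ((1/c) *\<^sub>R v)"
    using adm_hom[OF adm, of c "(1/c) *\<^sub>R v"] c by simp
  show "J (c *\<^sub>R x) + ereal (inner ((c powr (p - 1)) *\<^sub>R \<zeta>) (v - c *\<^sub>R x)) \<le> J v"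
  proof (cases "J ((1/c) *\<^sub>R v)")
    case (real k)
    have "j + inner \<zeta> ((1/c) *\<^sub>R v - x) \<le> k" by (rule subgrad_real[OF z jx real])
    hence "c powr p * (j + inner \<zeta> ((1/c) *\<^sub>R v - x)) \<le> c powr p * k"
      using c by (intro mult_left_mono) auto
    moreover have "c powr p * inner \<zeta> ((1/c) *\<^sub>R v - x) = c powr (p - 1) * inner \<zeta> (v - c *\<^sub>R x)"
    proof -
      have "(1/c) *\<^sub>R v - x = (1/c) *\<^sub>R (v - c *\<^sub>R x)" using c by (simp add: algebra_simps)
      hence "c powr p * inner \<zeta> ((1/c) *\<^sub>R v - x) = (c powr p / c) * inner \<zeta> (v - c *\<^sub>R x)"
        by simp
      also have "c powr p / c = c powr (p - 1)" using c by (simp add: powr_diff)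
      finally show ?thesis .
    qed
    ultimately show ?thesis using jcx jv real by (simp add: algebra_simps)
  next
    case PInf thus ?thesis using jv c by simp
  next
    case MInf thus ?thesis using adm_not_minf[OF adm] by blast
  qed
qed




lemma rayleigh_real:
  assumes "J x = ereal j" "x \<noteq> 0"
  shows "rayleigh p J x = ereal (p * j / norm x powr p)"
  using assms by (simp add: rayleigh_def)

locale flowset =
  fixes J :: "'a::{real_inner,complete_space} \<Rightarrow> ereal" and p :: real and f :: 'a and u :: "real \<Rightarrow> 'a"
  assumes p1: "1 \<le> p" and p2: "p < 2" and adm: "admissible p J"
    and fH0: "f \<in> H0 J" and gf: "gradient_flow J f u"
    and ext: "\<exists>T>0. \<forall>t\<ge>T. u t = 0" and lpos: "lambda1 p J > 0"
begin

definition "Tx = extinction_time u"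


lemma ucont: "continuous_on {0..} u" using gf by (simp add: gradient_flow_def)
lemma u0: "u 0 = f" using gf by (simp add: gradient_flow_def)
lemma uder: "t > 0 \<Longrightarrow> \<exists>\<zeta>. \<zeta> \<in> subdiff J (u t) \<and> (u has_vector_derivative - \<zeta>) (at t within {t..})"
  using gf by (auto simp: gradient_flow_def min_norm_elem_def)
lemma f0: "f \<noteq> 0" using fH0 by (simp add: H0_def)

lemma ucont_on: "0 \<le> a \<Longrightarrow> continuous_on {a..b} u"
  using ucont by (rule continuous_on_subset) auto

lemma orth: assumes t: "t \<ge> 0" and n: "n \<in> nullspace J" shows "inner (u t) n = 0"
proof -
  have cg: "continuous_on {0..t} (\<lambda>s. inner (u s) n)" using ucont_on[of 0 t] by (intro continuous_intros) auto
  have d: "((\<lambda>s. inner (u s) n) has_real_derivative 0) (at s within {s..})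
        \<and> ((\<lambda>s. - inner (u s) n) has_real_derivative 0) (at s within {s..})" if s0: "0 < s" for s
  proof -
    obtain \<zeta> where z: "\<zeta> \<in> subdiff J (u s)" "(u has_vector_derivative - \<zeta>) (at s within {s..})"
      using uder[OF s0] by blast
    have "((\<lambda>s. inner (u s) n) has_real_derivative inner (- \<zeta>) n) (at s within {s..})"
      by (rule vd_inner_const[OF z(2)])
    moreover have "inner (- \<zeta>) n = 0" using zeta_null[OF adm z(1) n] by simp
    ultimately show ?thesis using DERIV_minus by fastforce
  qed
  have "inner (u t) n \<le> inner (u 0) n"
    by (rule rd_mono[OF t cg]) (use d in blast)
  moreover have "- inner (u t) n \<le> - inner (u 0) n"
    by (rule rd_mono[OF t, where g = "\<lambda>s. - inner (u s) n"]) (use d cg in \<open>auto intro: continuous_intros\<close>)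
  moreover have "inner (u 0) n = 0" using fH0 n by (simp add: u0 H0_def)
  ultimately show ?thesis by linarith
qed

lemma norm_mono: assumes "0 \<le> s" "s \<le> t" shows "norm (u t) \<le> norm (u s)"
proof -
  have "norm (u t - (\<lambda>_. 0) t) \<le> norm (u s - (\<lambda>_. (0::'a)) s)"
  proof (rule contraction[OF assms(2) ucont_on[OF assms(1)]])
    show "continuous_on {s..t} (\<lambda>_. 0::'a)" by simp
    fix r assume r: "s < r" "r < t"
    obtain \<zeta> where z: "\<zeta> \<in> subdiff J (u r)" "(u has_vector_derivative - \<zeta>) (at r within {r..})"
      using uder[of r] r assms by auto
    obtain j where j: "J (u r) = ereal j" using subdiff_finite[OF adm z(1)] by blast
    have "inner \<zeta> (u r) = p * j" by (rule euler[OF adm z(1) j])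
    moreover have "j \<ge> 0" using J_nonneg[OF adm, of "u r"] j by simp
    ultimately have "inner (\<zeta> - 0) (u r - 0) \<ge> 0" using p1 by simp
    moreover have "((\<lambda>_. 0::'a) has_vector_derivative - 0) (at r within {r..})" by (simp add: has_vector_derivative_const)
    ultimately show "\<exists>\<xi> \<eta>. (u has_vector_derivative - \<xi>) (at r within {r..}) \<and>
          ((\<lambda>_. 0) has_vector_derivative - \<eta>) (at r within {r..}) \<and> 0 \<le> inner (\<xi> - \<eta>) (u r - 0)"
      using z(2) by blast
  qed
  thus ?thesis by simp
qed

definition "Sx = {T. T > 0 \<and> (\<forall>t\<ge>T. u t = 0)}"
lemma Sx_ne: "Sx \<noteq> {}" using ext by (auto simp: Sx_def)
lemma Sx_bdd: "bdd_below Sx" by (auto simp: Sx_def intro!: bdd_belowI[of _ 0] less_imp_le)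
lemma Tx_Sx: "Tx = Inf Sx" by (simp add: Tx_def extinction_time_def Sx_def)
lemma Tx_nonneg: "Tx \<ge> 0" unfolding Tx_Sx using Sx_ne by (intro cInf_greatest) (auto simp: Sx_def)

lemma zero_after: assumes "t \<ge> Tx" shows "u t = 0"
proof -
  have sub: "{Tx<..} \<subseteq> {s \<in> {0..}. u s = 0}"
  proof
    fix s assume s: "s \<in> {Tx<..}"
    then obtain x where "x \<in> Sx" "x < s" using cInf_less_iff[OF Sx_ne Sx_bdd] unfolding Tx_Sx by auto
    thus "s \<in> {s \<in> {0..}. u s = 0}" by (auto simp: Sx_def)
  qed
  have cl: "closed {s \<in> {0..}. u s = 0}" by (rule continuous_closed_preimage_constant[OF ucont]) auto
  have "closure {Tx<..} \<subseteq> {s \<in> {0..}. u s = 0}" by (rule closure_minimal[OF sub cl])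
  thus ?thesis using assms by auto
qed

lemma Tx_pos: "Tx > 0"
proof (rule ccontr)
  assume "\<not> Tx > 0"
  hence "Tx = 0" using Tx_nonneg by auto
  hence "u 0 = 0" using zero_after by auto
  thus False using u0 f0 by simp
qed

lemma nonzero_before: assumes "0 \<le> t" "t < Tx" shows "u t \<noteq> 0"
proof
  assume z: "u t = 0"
  have "t \<noteq> 0" using z u0 f0 by auto
  hence "t > 0" using assms by auto
  moreover have "u s = 0" if "s \<ge> t" for s using norm_mono[OF assms(1) that] z by simp
  ultimately have "t \<in> Sx" by (auto simp: Sx_def)
  hence "Tx \<le> t" unfolding Tx_Sx using Sx_bdd by (rule cInf_lower)
  thus False using assms by simp
qed

lemma in_H0: assumes "0 \<le> t" "t < Tx" shows "u t \<in> H0 J"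
  using orth nonzero_before[OF assms] assms by (auto simp: H0_def inner_commute)

lemma lambda1_real: obtains l where "lambda1 p J = ereal l" "l > 0"
proof -
  have t: "0 < Tx / 2" "Tx / 2 < Tx" using Tx_pos by auto
  obtain \<zeta> where z: "\<zeta> \<in> subdiff J (u (Tx/2))" using uder[OF t(1)] by blast
  obtain j where j: "J (u (Tx/2)) = ereal j" using subdiff_finite[OF adm z] by blast
  have nz: "u (Tx/2) \<noteq> 0" using nonzero_before t by auto
  have "lambda1 p J \<le> rayleigh p J (u (Tx/2))" unfolding lambda1_def
    by (rule INF_lower) (use in_H0 t in auto)
  also have "\<dots> = ereal (p * j / norm (u (Tx/2)) powr p)"
    by (rule rayleigh_real[where J=J and x="u (Tx/2)", OF j nz])
  finally have "lambda1 p J < \<infinity>" by auto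
  moreover have "lambda1 p J \<noteq> -\<infinity>" using lpos by auto
  ultimately show ?thesis using that lpos by (cases "lambda1 p J") auto
qed

lemma sq_powr: assumes "(y::real) \<ge> 0" shows "(y^2) powr (q/2) = y powr q"
proof (cases "y = 0")
  case False
  hence "y^2 = y powr 2" using assms by (simp add: powr_realpow)
  thus ?thesis by (simp add: powr_powr)
qed simp

lemma psi_mono:
  assumes t0: "0 \<le> t" and ts: "t \<le> s" and sT: "s \<le> Tx"
    and L: "\<And>r. t < r \<Longrightarrow> r < s \<Longrightarrow> ereal L \<le> rayleigh p J (u r)"
  shows "norm (u s) powr (2-p) + (2-p) * L * s \<le> norm (u t) powr (2-p) + (2-p) * L * t"
proof (rule rd_mono[OF ts, where g = "\<lambda>r. norm (u r) powr (2-p) + (2-p) * L * r"])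
  have "continuous_on {t..s} (\<lambda>r. norm (u r) powr (2-p))"
    using ucont_on[OF t0, of s] p2 by (intro continuous_on_powr' continuous_intros) auto
  thus "continuous_on {t..s} (\<lambda>r. norm (u r) powr (2-p) + (2-p) * L * r)"
    by (rule continuous_on_add) (intro continuous_intros)
  fix r assume r: "t < r" "r < s"
  have r0: "r > 0" using r t0 by auto
  obtain \<zeta> where z: "\<zeta> \<in> subdiff J (u r)" "(u has_vector_derivative - \<zeta>) (at r within {r..})"
    using uder[OF r0] by blast
  obtain j where j: "J (u r) = ereal j" using subdiff_finite[OF adm z(1)] by blast
  have nz: "u r \<noteq> 0" using nonzero_before r t0 sT by auto
  define n where "n = norm (u r)"
  have npos: "n > 0" using nz by (simp add: n_def)
  have eul: "inner \<zeta> (u r) = p * j" by (rule euler[OF adm z(1) j])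
  have Lle: "L \<le> p * j / n powr p"
    using L[OF r] rayleigh_real[where J=J and x="u r", OF j nz] by (simp add: n_def)
  have feq: "(\<lambda>x. norm (u x) powr (2-p)) = (\<lambda>x. (inner (u x) (u x)) powr ((2-p)/2))"
    by (auto simp: fun_eq_iff power2_norm_eq_inner[symmetric] sq_powr)
  have zz: "inner (u r) (u r) = n^2" by (simp add: n_def power2_norm_eq_inner)
  have zpos: "inner (u r) (u r) > 0" using npos zz by simp
  have d1: "((\<lambda>x. (inner (u x) (u x)) powr ((2-p)/2)) has_real_derivative
      ((2-p)/2) * (inner (u r) (u r)) powr ((2-p)/2 - 1) * (2 * inner (u r) (- \<zeta>))) (at r within {r..})"
    by (rule DERIV_chain2[OF has_real_derivative_powr[OF zpos] vd_inner_self[OF z(2)]])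
  have "(inner (u r) (u r)) powr ((2-p)/2 - 1) = (n^2) powr ((-p)/2)" using zz by (simp add: field_simps)
  also have "\<dots> = n powr (-p)" using npos by (intro sq_powr) auto
  also have "\<dots> = 1 / n powr p" by (simp add: powr_minus_divide)
  finally have pw: "(inner (u r) (u r)) powr ((2-p)/2 - 1) = 1 / n powr p" .
  have Deq: "((2-p)/2) * (inner (u r) (u r)) powr ((2-p)/2 - 1) * (2 * inner (u r) (- \<zeta>)) = - (2-p) * (p * j / n powr p)"
    using pw eul npos by (simp add: inner_commute field_simps)
  have d2: "((\<lambda>r. norm (u r) powr (2-p) + (2-p) * L * r) has_real_derivative
      (- (2-p) * (p * j / n powr p) + (2-p) * L)) (at r within {r..})"
  proof -
    have d1': "((\<lambda>x. norm (u x) powr (2-p)) has_real_derivative - (2-p) * (p * j / n powr p)) (at r within {r..})"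
      unfolding feq using d1 unfolding Deq .
    have d3: "((\<lambda>x. (2-p) * L * x) has_real_derivative (2-p) * L) (at r within {r..})"
      by (auto intro!: derivative_eq_intros)
    show ?thesis using DERIV_add[OF d1' d3] by simp
  qed
  moreover have "- (2-p) * (p * j / n powr p) + (2-p) * L \<le> 0"
  proof -
    have "(2-p) * L \<le> (2-p) * (p*j/n powr p)" using Lle p2 by (intro mult_left_mono) auto
    thus ?thesis by linarith
  qed
  ultimately show "\<exists>D. ((\<lambda>r. norm (u r) powr (2-p) + (2-p) * L * r) has_real_derivative D) (at r within {r..}) \<and> D \<le> 0"
    by blast
qed

end



lemma powr_id1:
  fixes b p :: real
  assumes b: "b > 0" and p2: "p < 2"
  shows "(1 / b powr (1/(2-p))) * b = (1 / b powr (1/(2-p))) powr (p - 1)"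
proof -
  define q where "q = 1/(2-p)"
  have qe: "- q * (p - 1) = 1 - q" using p2 by (simp add: q_def field_simps)
  have "1 / b powr q = b powr (-q)" by (simp add: powr_minus_divide)
  hence "(1 / b powr q) powr (p - 1) = b powr (1 - q)" using qe by (simp add: powr_powr)
  moreover have "(1 / b powr q) * b = b powr (1 - q)" using b
    by (simp add: powr_diff)
  ultimately show ?thesis by (simp add: q_def)
qed

lemma bern:
  fixes r \<sigma> p :: real
  assumes s: "\<sigma> > 0" and p1: "1 \<le> p"
  shows "\<sigma> powr p + p * \<sigma> powr (p - 1) * (r - \<sigma>) \<le> \<bar>r\<bar> powr p"
proof (cases "p = 1")
  case True thus ?thesis using s by simp
next
  case False
  hence p1': "p > 1" using p1 by auto
  have sp: "p * \<sigma> powr (p - 1) * \<sigma> = p * \<sigma> powr p" using s by (simp add: powr_diff)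
  show ?thesis
  proof (cases "r = 0")
    case True
    have "\<sigma> powr p + p * \<sigma> powr (p - 1) * (r - \<sigma>) = (1 - p) * \<sigma> powr p"
      using True s by (simp add: powr_diff field_simps)
    also have "\<dots> \<le> 0" using p1' by (simp add: mult_nonpos_nonneg)
    finally show ?thesis by (smt (verit) powr_ge_zero)
  next
    case False
    have "(\<bar>r\<bar> powr p) powr (1/p) * (\<sigma> powr p) powr (1 - 1/p) \<le> (1/p) * \<bar>r\<bar> powr p + (1 - 1/p) * \<sigma> powr p"
      using p1' False s by (intro Youngs_inequality_0) auto
    moreover have "(\<bar>r\<bar> powr p) powr (1/p) = \<bar>r\<bar>" using p1' False by (simp add: powr_powr)
    moreover have "(\<sigma> powr p) powr (1 - 1/p) = \<sigma> powr (p - 1)"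
    proof -
      have "p * (1 - 1/p) = p - 1" using p1' by (simp add: field_simps)
      thus ?thesis by (simp add: powr_powr)
    qed
    ultimately have "\<bar>r\<bar> * \<sigma> powr (p - 1) \<le> (1/p) * \<bar>r\<bar> powr p + (1 - 1/p) * \<sigma> powr p" by simp
    hence "p * (\<bar>r\<bar> * \<sigma> powr (p - 1)) \<le> p * ((1/p) * \<bar>r\<bar> powr p + (1 - 1/p) * \<sigma> powr p)"
      using p1' by (intro mult_left_mono) auto
    hence A: "p * \<bar>r\<bar> * \<sigma> powr (p - 1) \<le> \<bar>r\<bar> powr p + (p - 1) * \<sigma> powr p"
      using p1' by (simp add: algebra_simps)
    have "p * r * \<sigma> powr (p - 1) \<le> p * \<bar>r\<bar> * \<sigma> powr (p - 1)"
      using p1' s by (intro mult_right_mono mult_left_mono) auto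
    moreover have "p * \<sigma> powr (p - 1) * (r - \<sigma>) = p * r * \<sigma> powr (p - 1) - p * \<sigma> powr (p - 1) * \<sigma>"
      by (simp add: algebra_simps)
    moreover have "(p - 1) * \<sigma> powr p = p * \<sigma> powr p - \<sigma> powr p" by (simp add: algebra_simps)
    ultimately show ?thesis using A sp by linarith
  qed
qed

context flowset begin

lemma scaled_der:
  assumes b: "b > 0" and t0: "t0 \<ge> 0" and tau: "\<tau> > 0"
  shows "\<exists>\<xi>. \<xi> \<in> subdiff J ((1 / b powr (1/(2-p))) *\<^sub>R u (t0 + b*\<tau>)) \<and>
     ((\<lambda>\<tau>. (1 / b powr (1/(2-p))) *\<^sub>R u (t0 + b*\<tau>)) has_vector_derivative - \<xi>) (at \<tau> within {\<tau>..})"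
proof -
  define c where "c = 1 / b powr (1/(2-p))"
  have cpos: "c > 0" using b by (simp add: c_def)
  define t where "t = t0 + b*\<tau>"
  have t: "t > 0" using b t0 tau mult_pos_pos[OF b tau] unfolding t_def by linarith
  obtain \<zeta> where z: "\<zeta> \<in> subdiff J (u t)" "(u has_vector_derivative - \<zeta>) (at t within {t..})"
    using uder[OF t] by blast
  have fd: "((\<lambda>\<tau>. t0 + b*\<tau>) has_vector_derivative b) (at \<tau> within {\<tau>..})"
    unfolding has_real_derivative_iff_has_vector_derivative[symmetric]
    by (auto intro!: derivative_eq_intros)
  have img: "(\<lambda>\<tau>. t0 + b*\<tau>) ` {\<tau>..} = {t..}"
  proof
    show "(\<lambda>\<tau>. t0 + b*\<tau>) ` {\<tau>..} \<subseteq> {t..}" using b by (auto simp: t_def)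
    show "{t..} \<subseteq> (\<lambda>\<tau>. t0 + b*\<tau>) ` {\<tau>..}"
    proof
      fix x assume x: "x \<in> {t..}"
      have "x = t0 + b * ((x - t0)/b)" using b by simp
      moreover have "(x - t0)/b \<ge> \<tau>" using x b by (simp add: t_def field_simps)
      ultimately show "x \<in> (\<lambda>\<tau>. t0 + b*\<tau>) ` {\<tau>..}" by blast
    qed
  qed
  have "(u has_vector_derivative - \<zeta>) (at ((\<lambda>\<tau>. t0 + b*\<tau>) \<tau>) within (\<lambda>\<tau>. t0 + b*\<tau>) ` {\<tau>..})"
    using z(2) img by (simp add: t_def)
  from vector_diff_chain_within[OF fd this]
  have "((\<lambda>\<tau>. u (t0 + b*\<tau>)) has_vector_derivative b *\<^sub>R - \<zeta>) (at \<tau> within {\<tau>..})"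
    by (simp add: o_def)
  hence d: "((\<lambda>\<tau>. c *\<^sub>R u (t0 + b*\<tau>)) has_vector_derivative - ((c * b) *\<^sub>R \<zeta>)) (at \<tau> within {\<tau>..})"
    using has_vector_derivative_scaleR[OF DERIV_const[of c]] by fastforce
  have "(c powr (p - 1)) *\<^sub>R \<zeta> \<in> subdiff J (c *\<^sub>R u t)" by (rule subdiff_scale[OF adm z(1) cpos])
  moreover have "c * b = c powr (p - 1)" unfolding c_def by (rule powr_id1[OF b p2])
  ultimately show ?thesis using d unfolding c_def t_def by auto
qed

lemma scaled_contract:
  assumes b1: "b1 > 0" and b2: "b2 > 0" and t1: "t1 \<ge> 0" and t2: "t2 \<ge> 0" and tau: "\<tau> \<ge> 0"
  shows "norm ((1 / b1 powr (1/(2-p))) *\<^sub>R u (t1 + b1*\<tau>) - (1 / b2 powr (1/(2-p))) *\<^sub>R u (t2 + b2*\<tau>))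
     \<le> norm ((1 / b1 powr (1/(2-p))) *\<^sub>R u t1 - (1 / b2 powr (1/(2-p))) *\<^sub>R u t2)"
proof -
  have cV: "continuous_on {0..\<tau>} (\<lambda>\<tau>. (1 / b powr (1/(2-p))) *\<^sub>R u (t0 + b*\<tau>))" if "b > 0" "t0 \<ge> 0" for b t0
  proof -
    have "continuous_on {0..\<tau>} (\<lambda>\<tau>. t0 + b*\<tau>)" by (intro continuous_intros)
    moreover have "(\<lambda>\<tau>. t0 + b*\<tau>) ` {0..\<tau>} \<subseteq> {0..}" using that by auto
    ultimately have "continuous_on {0..\<tau>} (u \<circ> (\<lambda>\<tau>. t0 + b*\<tau>))"
      using continuous_on_compose continuous_on_subset[OF ucont] by blast
    thus ?thesis by (intro continuous_intros) (simp add: o_def)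
  qed
  have "norm ((\<lambda>\<tau>. (1 / b1 powr (1/(2-p))) *\<^sub>R u (t1 + b1*\<tau>)) \<tau> - (\<lambda>\<tau>. (1 / b2 powr (1/(2-p))) *\<^sub>R u (t2 + b2*\<tau>)) \<tau>)
     \<le> norm ((\<lambda>\<tau>. (1 / b1 powr (1/(2-p))) *\<^sub>R u (t1 + b1*\<tau>)) 0 - (\<lambda>\<tau>. (1 / b2 powr (1/(2-p))) *\<^sub>R u (t2 + b2*\<tau>)) 0)"
  proof (rule contraction[OF tau cV[OF b1 t1] cV[OF b2 t2]])
    fix r assume r: "0 < r" "r < \<tau>"
    obtain \<xi> where x: "\<xi> \<in> subdiff J ((1 / b1 powr (1/(2-p))) *\<^sub>R u (t1 + b1*r))"
      "((\<lambda>\<tau>. (1 / b1 powr (1/(2-p))) *\<^sub>R u (t1 + b1*\<tau>)) has_vector_derivative - \<xi>) (at r within {r..})"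
      using scaled_der[OF b1 t1 r(1)] by blast
    obtain \<eta> where y: "\<eta> \<in> subdiff J ((1 / b2 powr (1/(2-p))) *\<^sub>R u (t2 + b2*r))"
      "((\<lambda>\<tau>. (1 / b2 powr (1/(2-p))) *\<^sub>R u (t2 + b2*\<tau>)) has_vector_derivative - \<eta>) (at r within {r..})"
      using scaled_der[OF b2 t2 r(1)] by blast
    show "\<exists>\<xi> \<eta>. ((\<lambda>\<tau>. (1 / b1 powr (1/(2-p))) *\<^sub>R u (t1 + b1*\<tau>)) has_vector_derivative - \<xi>) (at r within {r..}) \<and>
          ((\<lambda>\<tau>. (1 / b2 powr (1/(2-p))) *\<^sub>R u (t2 + b2*\<tau>)) has_vector_derivative - \<eta>) (at r within {r..}) \<and>
          0 \<le> inner (\<xi> - \<eta>) ((\<lambda>\<tau>. (1 / b1 powr (1/(2-p))) *\<^sub>R u (t1 + b1*\<tau>)) r - (\<lambda>\<tau>. (1 / b2 powr (1/(2-p))) *\<^sub>R u (t2 + b2*\<tau>)) r)"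
      using x y subdiff_mono[OF adm x(1) y(1)] by auto
  qed
  thus ?thesis by simp
qed

end



context flowset begin

lemma lower_bound:
  assumes l: "lambda1 p J = ereal l" and t: "0 \<le> t" "t \<le> Tx"
  shows "(2-p) * l * (Tx - t) \<le> norm (u t) powr (2-p)"
proof -
  have "norm (u Tx) powr (2-p) + (2-p) * l * Tx \<le> norm (u t) powr (2-p) + (2-p) * l * t"
  proof (rule psi_mono[OF t order_refl])
    fix r assume r: "t < r" "r < Tx"
    have "lambda1 p J \<le> rayleigh p J (u r)" unfolding lambda1_def
      by (rule INF_lower) (use in_H0 r t in auto)
    thus "ereal l \<le> rayleigh p J (u r)" using l by simp
  qed
  moreover have "u Tx = 0" using zero_after by simp
  ultimately show ?thesis by (simp add: algebra_simps)
qed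

lemma gs_bound:
  assumes l: "lambda1 p J = ereal l" and x: "\<forall>n\<in>nullspace J. inner x n = 0" and j: "J x = ereal j"
    and w: "w \<noteq> 0"
  shows "l * (\<bar>inner w x\<bar> / norm w) powr p \<le> p * j"
proof (cases "x = 0")
  case True
  hence "j = 0" using j adm_J0[OF adm] by (simp add: zero_ereal_def)
  thus ?thesis using True by simp
next
  case False
  hence xH: "x \<in> H0 J" using x by (auto simp: H0_def inner_commute)
  have "lambda1 p J \<le> rayleigh p J x" unfolding lambda1_def by (rule INF_lower[OF xH])
  hence "l \<le> p * j / norm x powr p" using l rayleigh_real[where J=J and x=x, OF j False] by simp
  hence A: "l * norm x powr p \<le> p * j" using False by (simp add: field_simps)
  have lpos: "l > 0" using l lpos by simp
  have "\<bar>inner w x\<bar> / norm w \<le> norm x" using w Cauchy_Schwarz_ineq2[of w x] by (simp add: field_simps)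
  hence "(\<bar>inner w x\<bar> / norm w) powr p \<le> norm x powr p" using p1 by (intro powr_mono2) auto
  hence "l * (\<bar>inner w x\<bar> / norm w) powr p \<le> l * norm x powr p" using lpos by (intro mult_left_mono) auto
  thus ?thesis using A by linarith
qed

end

locale profset = flowset +
  fixes tk :: "nat \<Rightarrow> real" and w_star :: 'a
  assumes tk_inc: "incseq tk" and tk_rng: "\<And>k. 0 \<le> tk k \<and> tk k < extinction_time u"
    and tk_lim: "tk \<longlonglongrightarrow> extinction_time u"
    and w_lim: "(\<lambda>k. (1 / (1 - tk k / extinction_time u) powr (1 / (2 - p))) *\<^sub>R u (tk k)) \<longlonglongrightarrow> w_star"
begin

definition "bk k = 1 - tk k / Tx"
definition "wk k = (1 / (bk k) powr (1/(2-p))) *\<^sub>R u (tk k)"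

lemma tk0: "0 \<le> tk k" and tkT: "tk k < Tx" using tk_rng[of k] by (auto simp: Tx_def)
lemma bk_pos: "bk k > 0" using tkT[of k] Tx_pos by (simp add: bk_def)
lemma bk_le1: "bk k \<le> 1" using tk0[of k] Tx_pos by (simp add: bk_def)
lemma Tx_bk: "Tx - tk k = Tx * bk k" using Tx_pos by (simp add: bk_def field_simps)
lemma wk_lim: "wk \<longlonglongrightarrow> w_star"
proof -
  have "wk = (\<lambda>k. (1 / (1 - tk k / extinction_time u) powr (1 / (2 - p))) *\<^sub>R u (tk k))"
    by (auto simp: fun_eq_iff wk_def bk_def Tx_def)
  thus ?thesis using w_lim by simp
qed
lemma tk_lim': "tk \<longlonglongrightarrow> Tx" using tk_lim by (simp add: Tx_def)

lemma wk_norm: "norm (wk k) powr (2-p) = norm (u (tk k)) powr (2-p) / bk k"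
proof -
  have b: "bk k > 0" by (rule bk_pos)
  have "norm (wk k) = norm (u (tk k)) / bk k powr (1/(2-p))" using b by (simp add: wk_def)
  hence "norm (wk k) powr (2-p) = norm (u (tk k)) powr (2-p) / (bk k powr (1/(2-p))) powr (2-p)"
    using b by (simp add: powr_divide)
  also have "(bk k powr (1/(2-p))) powr (2-p) = bk k" using p2 b by (simp add: powr_powr)
  finally show ?thesis .
qed

lemma wk_lower: assumes l: "lambda1 p J = ereal l" shows "(2-p) * l * Tx \<le> norm (wk k) powr (2-p)"
proof -
  have "(2-p) * l * (Tx - tk k) \<le> norm (u (tk k)) powr (2-p)"
    using lower_bound[OF l tk0] tkT by (simp add: less_imp_le)
  hence "(2-p) * l * Tx * bk k \<le> norm (u (tk k)) powr (2-p)" by (simp add: Tx_bk algebra_simps)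
  thus ?thesis using bk_pos[of k] by (simp add: wk_norm field_simps)
qed

lemma normpow_lim: "(\<lambda>k. norm (wk k) powr (2-p)) \<longlonglongrightarrow> norm w_star powr (2-p)"
  using p2 by (intro tendsto_powr' tendsto_norm wk_lim tendsto_const) auto

lemma main_ineq: assumes l: "lambda1 p J = ereal l" shows "(2-p) * l * Tx \<le> norm w_star powr (2-p)"
  by (rule LIMSEQ_le_const[OF normpow_lim]) (use wk_lower[OF l] in auto)

lemma W_pos: "norm w_star > 0"
proof -
  obtain l where l: "lambda1 p J = ereal l" "l > 0" by (rule lambda1_real)
  have "(2-p) * l * Tx > 0" using l p2 Tx_pos by simp
  hence "norm w_star powr (2-p) > 0" using main_ineq[OF l(1)] by linarith
  thus ?thesis by (cases "norm w_star = 0") auto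
qed

lemma wstar_orth: assumes n: "n \<in> nullspace J" shows "inner w_star n = 0"
proof -
  have "(\<lambda>k. inner (wk k) n) \<longlonglongrightarrow> inner w_star n" by (intro tendsto_inner wk_lim tendsto_const)
  moreover have "inner (wk k) n = 0" for k using orth[OF tk0 n] by (simp add: wk_def)
  ultimately show ?thesis by (simp add: LIMSEQ_const_iff)
qed

lemma wstar_H0: "w_star \<in> H0 J"
  using wstar_orth W_pos by (auto simp: H0_def)

end



context profset begin

lemma gs_imp_eq:
  assumes l: "lambda1 p J = ereal l" and gs: "ground_state p J w_star"
  shows "norm w_star powr (2-p) \<le> (2-p) * l * Tx"
proof (rule ccontr)
  assume "\<not> ?thesis"
  hence hyp: "(2-p) * l * Tx < norm w_star powr (2-p)" by simp
  define W where "W = norm w_star"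
  have Wp: "W > 0" using W_pos by (simp add: W_def)
  have lp: "l > 0" using l lpos by simp
  have pp: "p > 0" using p1 by simp
  have ray: "rayleigh p J w_star = ereal l" using gs l by (simp add: ground_state_def)
  obtain jw where jw: "J w_star = ereal jw"
  proof (cases "J w_star")
    case PInf
    hence "rayleigh p J w_star = \<infinity>" using pp Wp by (simp add: rayleigh_def W_def)
    thus ?thesis using ray by simp
  next
    case MInf thus ?thesis using adm_not_minf[OF adm] by blast
  qed auto
  have wnz: "w_star \<noteq> 0" using Wp by (auto simp: W_def)
  have "ereal (p * jw / W powr p) = ereal l" using ray rayleigh_real[where J=J and x=w_star, OF jw wnz] by (simp add: W_def)
  hence jw_eq: "jw = l * W powr p / p" using pp Wp by (simp add: field_simps)
  define q where "q = 1/(2-p)"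
  have q2: "q * (2-p) = 1" using p2 by (simp add: q_def)
  have qp: "q > 0" using p2 by (simp add: q_def)
  define A where "A = l * W powr (p-2)"
  have Ap: "A > 0" using lp Wp by (simp add: A_def)
  define \<kappa> where "\<kappa> = 1 - (2-p)*A*Tx"
  have "(2-p)*A*Tx = ((2-p)*l*Tx) * W powr (p-2)" by (simp add: A_def algebra_simps)
  also have "\<dots> < W powr (2-p) * W powr (p-2)" using hyp Wp by (intro mult_strict_right_mono) (auto simp: W_def)
  also have "W powr (2-p) * W powr (p-2) = 1" using Wp by (simp add: powr_add[symmetric])
  finally have kp: "\<kappa> > 0" by (simp add: \<kappa>_def)
  define e0 where "e0 = \<kappa> powr q * W"
  have e0p: "e0 > 0" using kp Wp by (simp add: e0_def)
  have ev1: "eventually (\<lambda>k. tk k > 0) sequentially" by (rule order_tendstoD(1)[OF tk_lim' Tx_pos])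
  have ev2: "eventually (\<lambda>k. dist (wk k) w_star < e0) sequentially" by (rule tendstoD[OF wk_lim e0p])
  obtain k where k: "tk k > 0" "norm (wk k - w_star) < e0"
    using eventually_happens'[OF _ eventually_conj[OF ev1 ev2]] by (auto simp: dist_norm)
  define b where "b = bk k"
  define t0 where "t0 = tk k"
  have bp: "b > 0" using bk_pos by (simp add: b_def)
  have Tt0: "Tx - t0 = Tx * b" using Tx_bk by (simp add: b_def t0_def)
  have t0T: "t0 < Tx" using tkT by (simp add: t0_def)
  have t00: "t0 \<ge> 0" using tk0 by (simp add: t0_def)
  define X where "X t = b - (2-p)*A*(t - t0)" for t
  define y where "y t = (X t powr q) *\<^sub>R w_star" for t
  have XT: "X Tx = b * \<kappa>"
  proof -
    have "X Tx = b - (2-p)*A*(Tx*b)" unfolding X_def Tt0 ..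
    thus ?thesis by (simp add: \<kappa>_def algebra_simps)
  qed
  have Xge: "X t \<ge> b * \<kappa>" if "t \<le> Tx" for t
  proof -
    have "(2-p)*A*(t - t0) \<le> (2-p)*A*(Tx - t0)" using that Ap p2 by (intro mult_left_mono) auto
    thus ?thesis using XT by (simp add: X_def)
  qed
  have bk: "b * \<kappa> > 0" using bp kp by simp
  have contr: "norm (u Tx - y Tx) \<le> norm (u t0 - y t0)"
  proof (rule contraction[OF less_imp_le[OF t0T] ucont_on[OF t00]])
    have "continuous_on {t0..Tx} X" unfolding X_def by (intro continuous_intros)
    hence "continuous_on {t0..Tx} (\<lambda>t. X t powr q)"
      using Xge bk by (intro continuous_on_powr' continuous_intros) (auto, smt (verit))
    thus "continuous_on {t0..Tx} y" unfolding y_def[abs_def] by (rule continuous_on_scaleR[OF _ continuous_on_const])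
  next
    fix t assume t: "t0 < t" "t < Tx"
    have tp: "t > 0" using t t00 by simp
    obtain \<zeta> where z: "\<zeta> \<in> subdiff J (u t)" "(u has_vector_derivative - \<zeta>) (at t within {t..})"
      using uder[OF tp] by blast
    obtain j where j: "J (u t) = ereal j" using subdiff_finite[OF adm z(1)] by blast
    have Xtp: "X t > 0" using Xge[of t] t bk by simp
    define c where "c = X t powr q"
    have cp: "c > 0" using Xtp by (simp add: c_def)
    have dX: "(X has_real_derivative - ((2-p)*A)) (at t within {t..})"
      unfolding X_def by (auto intro!: derivative_eq_intros)
    have dc: "((\<lambda>t. X t powr q) has_real_derivative q * X t powr (q - 1) * - ((2-p)*A)) (at t within {t..})"
      by (rule DERIV_chain2[OF has_real_derivative_powr[OF Xtp] dX])
    have "q * X t powr (q - 1) * - ((2-p)*A) = - ((q*(2-p)) * (A * X t powr (q - 1)))" by (simp add: algebra_simps)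
    hence eqd: "q * X t powr (q - 1) * - ((2-p)*A) = - (A * X t powr (q - 1))" unfolding q2 by simp
    have dc': "((\<lambda>t. X t powr q) has_real_derivative - (A * X t powr (q - 1))) (at t within {t..})" using dc unfolding eqd .
    define \<eta> where "\<eta> = (A * X t powr (q - 1)) *\<^sub>R w_star"
    have dy: "(y has_vector_derivative - \<eta>) (at t within {t..})"
      using has_vector_derivative_scaleR[OF dc' has_vector_derivative_const[of w_star]]
      by (simp add: y_def[abs_def] \<eta>_def)
    define \<sigma> where "\<sigma> = c * W"
    have sp: "\<sigma> > 0" using cp Wp by (simp add: \<sigma>_def)
    define r where "r = inner w_star (u t) / W"
    have Jy: "J (y t) = ereal (c powr p * jw)" using adm_hom[OF adm, of c w_star] cp jw by (simp add: y_def c_def)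
    have a: "j + inner \<zeta> (y t - u t) \<le> c powr p * jw" by (rule subgrad_real[OF z(1) j Jy])
    have gb: "l * (\<bar>inner w_star (u t)\<bar> / norm w_star) powr p \<le> p * j"
      by (rule gs_bound[OF l _ j wnz]) (use orth tp in auto)
    hence gb': "l * \<bar>r\<bar> powr p \<le> p * j" using Wp by (simp add: r_def W_def abs_div)
    have br: "\<sigma> powr p + p * \<sigma> powr (p - 1) * (r - \<sigma>) \<le> \<bar>r\<bar> powr p" by (rule bern[OF sp p1])
    hence br': "l * (\<sigma> powr p + p * \<sigma> powr (p - 1) * (r - \<sigma>)) \<le> l * \<bar>r\<bar> powr p" using lp by (intro mult_left_mono) auto
    have s1: "\<sigma> powr (p - 1) = X t powr (q - 1) * W powr (p - 1)"
    proof -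
      have "\<sigma> powr (p - 1) = c powr (p - 1) * W powr (p - 1)" using cp Wp by (simp add: \<sigma>_def powr_mult)
      moreover have "c powr (p - 1) = X t powr (q - 1)"
      proof -
        have "q * (p - 1) = q - 1" using q2 by (simp add: algebra_simps)
        thus ?thesis by (simp add: c_def powr_powr)
      qed
      ultimately show ?thesis by simp
    qed
    have s2: "W powr (p - 2) * W = W powr (p - 1)" using Wp by (simp add: powr_diff power2_eq_square field_simps)
    have s3: "\<sigma> powr p = c powr p * W powr p" using cp Wp by (simp add: \<sigma>_def powr_mult)
    have ww: "inner w_star w_star = W * W" by (simp add: W_def dot_square_norm power2_eq_square)
    have ieta: "inner \<eta> (u t - y t) = l * \<sigma> powr (p - 1) * (r - \<sigma>)"
    proof -
      have "inner \<eta> (u t - y t) = A * X t powr (q - 1) * (inner w_star (u t) - c * (W * W))"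
        by (simp add: \<eta>_def y_def c_def inner_diff_right ww algebra_simps)
      also have "inner w_star (u t) = r * W" using Wp by (simp add: r_def)
      also have "A * X t powr (q - 1) * (r * W - c * (W * W)) = l * (W powr (p - 2) * W) * X t powr (q - 1) * (r - \<sigma>)"
        by (simp add: A_def \<sigma>_def algebra_simps)
      also have "\<dots> = l * \<sigma> powr (p - 1) * (r - \<sigma>)" using s1 s2 by (simp add: algebra_simps)
      finally show ?thesis .
    qed
    have cj: "c powr p * jw = l * \<sigma> powr p / p" using s3 jw_eq by (simp add: algebra_simps)
    have b: "inner \<eta> (u t - y t) \<le> j - c powr p * jw"
    proof -
      have "p * (l * \<sigma> powr (p - 1) * (r - \<sigma>)) + l * \<sigma> powr p \<le> p * j" using br' gb' by (simp add: algebra_simps)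
      hence "l * \<sigma> powr (p - 1) * (r - \<sigma>) \<le> j - l * \<sigma> powr p / p" using pp by (simp add: field_simps)
      thus ?thesis using ieta cj by simp
    qed
    have "0 \<le> inner (\<zeta> - \<eta>) (u t - y t)"
      using a b by (simp add: inner_diff_left inner_diff_right algebra_simps)
    thus "\<exists>\<xi> \<eta>. (u has_vector_derivative - \<xi>) (at t within {t..}) \<and> (y has_vector_derivative - \<eta>) (at t within {t..})
        \<and> 0 \<le> inner (\<xi> - \<eta>) (u t - y t)" using z(2) dy by blast
  qed
  have uT: "u Tx = 0" using zero_after by simp
  have "norm (u Tx - y Tx) = b powr q * \<kappa> powr q * W"
    using uT XT bp kp by (simp add: y_def W_def powr_mult)
  moreover have "u t0 = b powr q *\<^sub>R wk k" using bp by (simp add: wk_def b_def t0_def q_def)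
  hence "norm (u t0 - y t0) = b powr q * norm (wk k - w_star)"
    by (simp add: y_def X_def scaleR_diff_right[symmetric])
  ultimately have "b powr q * (\<kappa> powr q * W) \<le> b powr q * norm (wk k - w_star)" using contr by (simp add: mult.assoc)
  hence "\<kappa> powr q * W \<le> norm (wk k - w_star)" using bp by simp
  thus False using k(2) by (simp add: e0_def)
qed

end



context profset begin

definition "eps l k = norm (wk k) powr (2-p) / Tx - (2-p) * l"
definition "dl l k = min (1/2) (sqrt (eps l k) + inverse (real (Suc k)))"
definition "Lk l k = l + 2 * eps l k / ((2-p) * dl l k) + inverse (real (Suc k))"

lemma eps_nonneg: assumes l: "lambda1 p J = ereal l" shows "eps l k \<ge> 0"
  using wk_lower[OF l, of k] Tx_pos by (simp add: eps_def field_simps)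

lemma eps_lim: assumes l: "lambda1 p J = ereal l" and eq: "norm w_star powr (2-p) = (2-p) * l * Tx"
  shows "eps l \<longlonglongrightarrow> 0"
proof -
  have "eps l \<longlonglongrightarrow> norm w_star powr (2-p) / Tx - (2-p) * l"
    unfolding eps_def[abs_def] by (intro tendsto_intros normpow_lim) (use Tx_pos in auto)
  moreover have "norm w_star powr (2-p) / Tx - (2-p) * l = 0" using eq Tx_pos by simp
  ultimately show ?thesis by simp
qed

lemma dl_pos: assumes l: "lambda1 p J = ereal l" shows "dl l k > 0" "dl l k \<le> 1/2"
proof -
  have "sqrt (eps l k) \<ge> 0" using eps_nonneg[OF l, of k] by simp
  moreover have "inverse (real (Suc k)) > 0" by simp
  ultimately have "sqrt (eps l k) + inverse (real (Suc k)) > 0" by linarith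
  thus "dl l k > 0" by (simp add: dl_def)
  show "dl l k \<le> 1/2" unfolding dl_def by (rule min.cobounded1)
qed

lemma dl_lim: assumes l: "lambda1 p J = ereal l" and eq: "norm w_star powr (2-p) = (2-p) * l * Tx"
  shows "dl l \<longlonglongrightarrow> 0"
proof -
  have "dl l \<longlonglongrightarrow> min (1/2) (sqrt 0 + 0)"
    unfolding dl_def[abs_def] by (intro tendsto_intros eps_lim[OF l eq] LIMSEQ_inverse_real_of_nat)
  thus ?thesis by simp
qed

lemma Lk_lim: assumes l: "lambda1 p J = ereal l" and eq: "norm w_star powr (2-p) = (2-p) * l * Tx"
  shows "Lk l \<longlonglongrightarrow> l"
proof -
  have bnd: "eps l k / dl l k \<le> 2 * eps l k + sqrt (eps l k)" for k
  proof -
    have e0: "eps l k \<ge> 0" by (rule eps_nonneg[OF l])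
    have d0: "dl l k > 0" by (rule dl_pos[OF l])
    have "eps l k \<le> (2 * eps l k + sqrt (eps l k)) * dl l k"
    proof (cases "dl l k = 1/2")
      case True
      have "eps l k \<le> (2 * eps l k + sqrt (eps l k)) * (1/2)" using e0 by simp
      thus ?thesis unfolding True .
    next
      case False
      hence dd: "dl l k = sqrt (eps l k) + inverse (real (Suc k))" by (auto simp: dl_def min_def)
      have "eps l k = sqrt (eps l k) * sqrt (eps l k)" using e0 by simp
      also have "\<dots> \<le> (2 * eps l k + sqrt (eps l k)) * dl l k" unfolding dd using e0
        by (intro mult_mono) auto
      finally show ?thesis .
    qed
    thus ?thesis using d0 by (simp add: pos_divide_le_eq)
  qed
  have lim0: "(\<lambda>k. eps l k / dl l k) \<longlonglongrightarrow> 0"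
  proof (rule tendsto_sandwich[of "\<lambda>_. 0" _ _ "\<lambda>k. 2 * eps l k + sqrt (eps l k)"])
    show "\<forall>\<^sub>F n in sequentially. 0 \<le> eps l n / dl l n" using eps_nonneg[OF l] dl_pos(1)[OF l]
      by (auto intro!: always_eventually divide_nonneg_pos)
    show "\<forall>\<^sub>F n in sequentially. eps l n / dl l n \<le> 2 * eps l n + sqrt (eps l n)" using bnd by simp
    show "(\<lambda>k. 2 * eps l k + sqrt (eps l k)) \<longlonglongrightarrow> 0"
      using tendsto_add[OF tendsto_mult[OF tendsto_const eps_lim[OF l eq]] tendsto_real_sqrt[OF eps_lim[OF l eq]]] by simp
  qed simp
  have "Lk l = (\<lambda>k. l + 2 / (2-p) * (eps l k / dl l k) + inverse (real (Suc k)))"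
    by (auto simp: Lk_def fun_eq_iff)
  moreover have "(\<lambda>k. l + 2 / (2-p) * (eps l k / dl l k) + inverse (real (Suc k))) \<longlonglongrightarrow> l + 2 / (2-p) * 0 + 0"
    by (intro tendsto_intros lim0 LIMSEQ_inverse_real_of_nat)
  ultimately show ?thesis by simp
qed

lemma exists_s:
  assumes l: "lambda1 p J = ereal l"
  shows "\<exists>s. tk k < s \<and> s < tk k + dl l k * (Tx - tk k) \<and> \<not> (ereal (Lk l k) \<le> rayleigh p J (u s))"
proof (rule ccontr)
  assume "\<not> ?thesis"
  hence L: "\<And>r. tk k < r \<Longrightarrow> r < tk k + dl l k * (Tx - tk k) \<Longrightarrow> ereal (Lk l k) \<le> rayleigh p J (u r)" by blast
  define D where "D = Tx - tk k"
  define d where "d = dl l k"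
  define e where "e = eps l k"
  define L where "L = Lk l k"
  define se where "se = tk k + d * D"
  have Dp: "D > 0" using tkT by (simp add: D_def)
  have dp: "d > 0" "d \<le> 1/2" using dl_pos[OF l] by (auto simp: d_def)
  have ep: "e \<ge> 0" using eps_nonneg[OF l] by (simp add: e_def)
  have dD: "d * D \<le> D" using dp Dp by simp
  have se1: "tk k \<le> se" using dp Dp by (simp add: se_def)
  have se2: "se \<le> Tx" using dD by (simp add: se_def D_def)
  have psi: "norm (u se) powr (2-p) + (2-p) * L * se \<le> norm (u (tk k)) powr (2-p) + (2-p) * L * tk k"
    by (rule psi_mono[OF tk0 se1 se2]) (use L in \<open>auto simp: L_def se_def d_def D_def\<close>)
  have lb: "(2-p) * l * (Tx - se) \<le> norm (u se) powr (2-p)" by (rule lower_bound[OF l _ se2]) (use se1 tk0[of k] in linarith)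
  have ntk: "norm (u (tk k)) powr (2-p) = D * (e + (2-p) * l)"
  proof -
    have "norm (u (tk k)) powr (2-p) = bk k * norm (wk k) powr (2-p)" using wk_norm[of k] bk_pos[of k] by (simp add: field_simps)
    also have "norm (wk k) powr (2-p) = Tx * (e + (2-p) * l)" using Tx_pos by (simp add: e_def eps_def field_simps)
    also have "bk k * (Tx * (e + (2-p) * l)) = (Tx * bk k) * (e + (2-p) * l)" by simp
    also have "Tx * bk k = D" using Tx_bk[of k] by (simp add: D_def)
    finally show ?thesis .
  qed
  have "(2-p) * l * (D - d * D) + (2-p) * L * (d * D) \<le> D * (e + (2-p) * l)"
    using psi lb ntk by (simp add: se_def D_def algebra_simps)
  hence "((2-p) * (L - l) * d) * D \<le> e * D" by (simp add: algebra_simps)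
  hence ineq: "(2-p) * (L - l) * d \<le> e" using Dp by simp
  have Ll: "L - l = 2*e/((2-p)*d) + inverse (real (Suc k))" by (simp add: L_def Lk_def e_def d_def)
  have t1: "(2-p)*d*(2*e/((2-p)*d)) = 2*e" using dp p2 by (simp add: field_simps)
  have "(2-p) * (L - l) * d = (2-p)*d*(2*e/((2-p)*d)) + (2-p) * d * inverse (real (Suc k))"
    unfolding Ll by (simp add: algebra_simps)
  hence "(2-p) * (L - l) * d = 2 * e + (2-p) * d * inverse (real (Suc k))" unfolding t1 .
  moreover have "(2-p) * d * inverse (real (Suc k)) > 0" using dp p2 by simp
  ultimately show False using ineq ep by linarith
qed

end



context profset begin

lemma eq_imp_gs:
  assumes l: "lambda1 p J = ereal l" and eq: "norm w_star powr (2-p) = (2-p) * l * Tx"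
  shows "ground_state p J w_star"
proof -
  define W where "W = norm w_star"
  have Wp: "W > 0" using W_pos by (simp add: W_def)
  have lp: "l > 0" using l lpos by simp
  have pp: "p > 0" using p1 by simp
  obtain sk where sk: "\<And>k. tk k < sk k \<and> sk k < tk k + dl l k * (Tx - tk k) \<and> \<not> (ereal (Lk l k) \<le> rayleigh p J (u (sk k)))"
    using exists_s[OF l] by metis
  define c where "c k = 1 / bk k powr (1/(2-p))" for k
  have cp: "c k > 0" for k using bk_pos[of k] by (simp add: c_def)
  define zk where "zk k = c k *\<^sub>R u (sk k)" for k
  define tau where "tau k = (sk k - tk k) / bk k" for k
  have tau_pos: "tau k > 0" for k using sk[of k] bk_pos[of k] by (simp add: tau_def)
  have tau_lt: "tau k < dl l k * Tx" for k
  proof -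
    have "sk k - tk k < dl l k * (Tx * bk k)" using sk[of k] Tx_bk[of k] by simp
    thus ?thesis using bk_pos[of k] by (simp add: tau_def divide_less_eq algebra_simps)
  qed
  have sk_eq: "tk k + bk k * tau k = sk k" for k using bk_pos[of k] by (simp add: tau_def)
  have sk_pos: "sk k > 0" for k using sk[of k] tk0[of k] by linarith
  have sk_lt: "sk k < Tx" for k
  proof -
    have "dl l k * (Tx - tk k) \<le> Tx - tk k" using dl_pos[OF l, of k] tkT[of k] by (simp add: mult_le_cancel_right1)
    thus ?thesis using sk[of k] by linarith
  qed
  have Jz: "J (zk k) \<le> ereal (Lk l k * norm (zk k) powr p / p)" for k
  proof -
    obtain \<zeta> where z: "\<zeta> \<in> subdiff J (u (sk k))" using uder[OF sk_pos[of k]] by blast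
    obtain j where j: "J (u (sk k)) = ereal j" using subdiff_finite[OF adm z] by blast
    have nz: "u (sk k) \<noteq> 0" using nonzero_before sk_pos[of k] sk_lt[of k] by simp
    have "ereal (p * j / norm (u (sk k)) powr p) < ereal (Lk l k)"
      using sk[of k] rayleigh_real[where J=J and x="u (sk k)", OF j nz] by simp
    hence "p * j < Lk l k * norm (u (sk k)) powr p" using nz by (simp add: divide_less_eq)
    hence "c k powr p * (p * j) \<le> c k powr p * (Lk l k * norm (u (sk k)) powr p)"
      using cp[of k] by (intro mult_left_mono) auto
    moreover have "norm (zk k) powr p = c k powr p * norm (u (sk k)) powr p"
      using cp[of k] by (simp add: zk_def powr_mult)
    moreover have "J (zk k) = ereal (c k powr p * j)" using adm_hom[OF adm, of "c k" "u (sk k)"] cp[of k] j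
      by (simp add: zk_def)
    ultimately show ?thesis using pp by (simp add: field_simps)
  qed
  have tau_lim: "tau \<longlonglongrightarrow> 0"
  proof (rule tendsto_sandwich[of "\<lambda>_. 0" _ _ "\<lambda>k. dl l k * Tx"])
    show "\<forall>\<^sub>F n in sequentially. 0 \<le> tau n" using tau_pos by (simp add: less_imp_le)
    show "\<forall>\<^sub>F n in sequentially. tau n \<le> dl l n * Tx" using tau_lt by (simp add: less_imp_le)
    show "(\<lambda>k. dl l k * Tx) \<longlonglongrightarrow> 0" using tendsto_mult[OF dl_lim[OF l eq] tendsto_const[of Tx]] by simp
  qed simp
  have zlim: "zk \<longlonglongrightarrow> w_star"
  proof (rule tendstoI)
    fix e :: real assume e: "e > 0"
    obtain N where N: "\<And>k. k \<ge> N \<Longrightarrow> dist (wk k) w_star < e/4"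
      using tendstoD[OF wk_lim, of "e/4"] e by (auto simp: eventually_sequentially)
    define V where "V k \<tau> = c k *\<^sub>R u (tk k + bk k * \<tau>)" for k \<tau>
    have Vk0: "V k 0 = wk k" for k by (simp add: V_def wk_def c_def)
    have zV: "zk k = V k (tau k)" for k by (simp add: zk_def V_def sk_eq)
    have "\<exists>d>0. \<forall>x'\<in>{0..}. dist x' (tk N) < d \<longrightarrow> dist (u x') (u (tk N)) < e/4 / c N"
      using ucont unfolding continuous_on_iff using tk0[of N] e cp[of N] by auto
    then obtain d where d: "d > 0" "\<And>x'. x' \<ge> 0 \<Longrightarrow> dist x' (tk N) < d \<Longrightarrow> dist (u x') (u (tk N)) < e/4 / c N"
      by auto
    define \<rho> where "\<rho> = d / bk N"
    have rp: "\<rho> > 0" using d bk_pos[of N] by (simp add: \<rho>_def)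
    have VN: "norm (V N \<tau> - wk N) < e/4" if "0 \<le> \<tau>" "\<tau> < \<rho>" for \<tau>
    proof -
      have "bk N * \<tau> < d" using that bk_pos[of N] by (simp add: \<rho>_def field_simps)
      hence "dist (u (tk N + bk N * \<tau>)) (u (tk N)) < e/4 / c N"
        using d(2)[of "tk N + bk N * \<tau>"] tk0[of N] bk_pos[of N] that by (simp add: dist_real_def)
      hence "c N * norm (u (tk N + bk N * \<tau>) - u (tk N)) < e/4" using cp[of N] by (simp add: dist_norm field_simps)
      moreover have "V N \<tau> - wk N = c N *\<^sub>R (u (tk N + bk N * \<tau>) - u (tk N))"
        by (simp add: V_def wk_def c_def scaleR_diff_right)
      ultimately show ?thesis using cp[of N] by simp
    qed
    have ev: "eventually (\<lambda>k. tau k < \<rho>) sequentially" by (rule order_tendstoD(2)[OF tau_lim rp])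
    show "eventually (\<lambda>k. dist (zk k) w_star < e) sequentially"
      using ev eventually_ge_at_top[of N]
    proof eventually_elim
      case (elim k)
      have "norm (V k (tau k) - V N (tau k)) \<le> norm (wk k - wk N)"
        using scaled_contract[OF bk_pos[of k] bk_pos[of N] tk0[of k] tk0[of N] less_imp_le[OF tau_pos[of k]]]
        by (simp add: V_def c_def wk_def)
      also have "\<dots> \<le> norm (wk k - w_star) + norm (wk N - w_star)" using norm_triangle_ineq4[of "wk k - w_star" "wk N - w_star"] by simp
      also have "\<dots> < e/4 + e/4" using N[of k] N[of N] elim by (intro add_strict_mono) (auto simp: dist_norm)
      finally have A: "norm (V k (tau k) - V N (tau k)) < e/2" by simp
      have B: "norm (V N (tau k) - wk N) < e/4" using VN[of "tau k"] tau_pos[of k] elim by simp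
      have C: "norm (wk N - w_star) < e/4" using N[of N] by (simp add: dist_norm)
      have "norm (zk k - w_star) \<le> norm (V k (tau k) - V N (tau k)) + norm (V N (tau k) - wk N) + norm (wk N - w_star)"
        unfolding zV by (rule norm_diff_triangle_le[OF norm_diff_triangle_le order_refl]) auto
      thus ?case using A B C by (simp add: dist_norm)
    qed
  qed
  have Jw: "J w_star \<le> ereal (l * W powr p / p)"
  proof (rule ereal_le_epsilon2)
    fix e :: real assume e: "e > 0"
    define cc where "cc = l * W powr p / p + e"
    have cl: "closed {x. J x \<le> ereal cc}" using adm by (simp add: admissible_def lsc_ereal_def)
    have "(\<lambda>k. Lk l k * norm (zk k) powr p / p) \<longlonglongrightarrow> l * W powr p / p"
      unfolding W_def using Wp pp by (intro tendsto_intros Lk_lim[OF l eq] zlim) (auto simp: W_def)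
    hence "eventually (\<lambda>k. Lk l k * norm (zk k) powr p / p < cc) sequentially"
      using e by (intro order_tendstoD(2)) (auto simp: cc_def)
    hence "eventually (\<lambda>k. zk k \<in> {x. J x \<le> ereal cc}) sequentially"
    proof eventually_elim
      case (elim k)
      thus ?case using Jz[of k] by (auto elim: order_trans)
    qed
    hence "w_star \<in> {x. J x \<le> ereal cc}" by (rule Lim_in_closed_set[OF cl _ _ zlim]) simp
    thus "J w_star \<le> ereal (l * W powr p / p) + ereal e" by (simp add: cc_def)
  qed
  have wH: "w_star \<in> H0 J" by (rule wstar_H0)
  have wnz: "w_star \<noteq> 0" using Wp by (auto simp: W_def)
  obtain jw where jw: "J w_star = ereal jw" using Jw adm_not_minf[OF adm, of w_star] by (cases "J w_star") auto
  have "lambda1 p J \<le> rayleigh p J w_star" unfolding lambda1_def by (rule INF_lower[OF wH])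
  hence "l \<le> p * jw / W powr p" using l rayleigh_real[where J=J and x=w_star, OF jw wnz] by (simp add: W_def)
  moreover have "p * jw / W powr p \<le> l" using Jw jw Wp pp by (simp add: field_simps)
  ultimately have "p * jw / W powr p = l" by simp
  hence "rayleigh p J w_star = lambda1 p J" using l rayleigh_real[where J=J and x=w_star, OF jw wnz] by (simp add: W_def)
  thus ?thesis using wH by (simp add: ground_state_def)
qed

end


context profset begin

lemma final_result:
  shows "ereal ((2 - p) * extinction_time u) * lambda1 p J \<le> ereal (norm w_star powr (2 - p))
         \<and> (ereal ((2 - p) * extinction_time u) * lambda1 p J = ereal (norm w_star powr (2 - p))
              \<longleftrightarrow> ground_state p J w_star)"
proof -
  obtain l where l: "lambda1 p J = ereal l" "l > 0" by (rule lambda1_real)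
  have e1: "ereal ((2 - p) * extinction_time u) * lambda1 p J = ereal ((2-p) * l * Tx)"
    using l by (simp add: Tx_def algebra_simps)
  show ?thesis unfolding e1
  proof (intro conjI iffI)
    show "ereal ((2-p) * l * Tx) \<le> ereal (norm w_star powr (2 - p))" using main_ineq[OF l(1)] by simp
  next
    assume "ereal ((2-p) * l * Tx) = ereal (norm w_star powr (2 - p))"
    hence "norm w_star powr (2-p) = (2-p) * l * Tx" by simp
    thus "ground_state p J w_star" by (rule eq_imp_gs[OF l(1)])
  next
    assume "ground_state p J w_star"
    hence "norm w_star powr (2-p) \<le> (2-p) * l * Tx" by (rule gs_imp_eq[OF l(1)])
    thus "ereal ((2-p) * l * Tx) = ereal (norm w_star powr (2 - p))" using main_ineq[OF l(1)] by simp
  qed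
qed

end

theorem proposition5:
  fixes J :: "'a::{real_inner,complete_space} \<Rightarrow> ereal"
    and p :: real and f w_star :: 'a and u :: "real \<Rightarrow> 'a"
  assumes "1 \<le> p" and "p < 2"
    and "admissible p J"
    and "lambda1 p J > 0"
    and "f \<in> H0 J"
    and "gradient_flow J f u"
    and "\<exists>T>0. \<forall>t\<ge>T. u t = 0"
    and "\<exists>tk :: nat \<Rightarrow> real. incseq tk \<and> (\<forall>k. 0 \<le> tk k \<and> tk k < extinction_time u) \<and>
           tk \<longlonglongrightarrow> extinction_time u \<and>
           (\<lambda>k. (1 / (1 - tk k / extinction_time u) powr (1 / (2 - p))) *\<^sub>R u (tk k))
             \<longlonglongrightarrow> w_star"
  shows "ereal ((2 - p) * extinction_time u) * lambda1 p J \<le> ereal (norm w_star powr (2 - p))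
         \<and> (ereal ((2 - p) * extinction_time u) * lambda1 p J = ereal (norm w_star powr (2 - p))
              \<longleftrightarrow> ground_state p J w_star)"
proof -
  obtain tk :: "nat \<Rightarrow> real" where tk: "incseq tk" "\<forall>k. 0 \<le> tk k \<and> tk k < extinction_time u"
    "tk \<longlonglongrightarrow> extinction_time u"
    "(\<lambda>k. (1 / (1 - tk k / extinction_time u) powr (1 / (2 - p))) *\<^sub>R u (tk k)) \<longlonglongrightarrow> w_star"
    using assms(8) by blast
  interpret profset J p f u tk w_star
    using assms(1-7) tk by unfold_locales auto
  show ?thesis by (rule final_result)
qed

end
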